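(* Let $n\geq1$ and $1\leq i<j\leq n$. In $M_n$, the right-lcm of $\rho_i$ and $\rho_j$ exists and equals $\rho_i\rho_n^{\,i}\rho_{j-i}=\rho_j\rho_n^{\,i}$.
   Context: $M_n$ denotes the monoid with generators $\rho_1,\dots,\rho_n$ and relations $\rho_1\rho_n\rho_i=\rho_{i+1}\rho_n$ for $1\leq i\leq n-1$. A right-lcm of $a,b$ is a common right-multiple of $a$ and $b$ (an element $ax=by$) that left-divides every common right-multiple of $a$ and $b$. *)

theory Defs
  imports Main
begin

text \<open>The monoid M_n is presented by generators rho_1..rho_n (encoded as the naturals 1..n)
  and relations rho_1 rho_n rho_i = rho_{i+1} rho_n for 1 <= i <= n-1.
  Elements are represented by words (lists over {1..n}) modulo the congruence
  generated by the relations.\<close>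

definition rels :: "nat \<Rightarrow> (nat list \<times> nat list) set" where
  "rels n = {([1, n, i], [i + 1, n]) | i. 1 \<le> i \<and> i \<le> n - 1}"

definition words :: "nat \<Rightarrow> nat list set" where
  "words n = lists {1..n}"

definition rstep :: "nat \<Rightarrow> nat list \<Rightarrow> nat list \<Rightarrow> bool" where
  "rstep n x y \<longleftrightarrow> (\<exists>u v l r. ((l, r) \<in> rels n \<or> (r, l) \<in> rels n)
      \<and> x = u @ l @ v \<and> y = u @ r @ v)"

definition meq :: "nat \<Rightarrow> nat list \<Rightarrow> nat list \<Rightarrow> bool" where
  "meq n = (rstep n)\<^sup>*\<^sup>*"

definition ldiv :: "nat \<Rightarrow> nat list \<Rightarrow> nat list \<Rightarrow> bool" where
  "ldiv n a b \<longleftrightarrow> (\<exists>x \<in> words n. meq n (a @ x) b)"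

definition is_right_lcm :: "nat \<Rightarrow> nat list \<Rightarrow> nat list \<Rightarrow> nat list \<Rightarrow> bool" where
  "is_right_lcm n a b c \<longleftrightarrow> c \<in> words n \<and> ldiv n a c \<and> ldiv n b c \<and>
     (\<forall>d \<in> words n. ldiv n a d \<and> ldiv n b d \<longrightarrow> ldiv n c d)"

end

theory Submission
  imports Defs
begin

lemma rstep_sym: "rstep n x y \<Longrightarrow> rstep n y x"
  unfolding rstep_def by blast

lemma meq_refl[simp]: "meq n x x" by (simp add: meq_def)

lemma meq_step: "rstep n x y \<Longrightarrow> meq n x y"
  by (simp add: meq_def)

lemma meq_trans: "meq n x y \<Longrightarrow> meq n y z \<Longrightarrow> meq n x z"
  unfolding meq_def by simp

declare meq_trans[trans]

lemma meq_sym: "meq n x y \<Longrightarrow> meq n y x"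
  unfolding meq_def
proof (induction rule: rtranclp_induct)
  case base then show ?case by simp
next
  case (step y z) then show ?case
    by (meson converse_rtranclp_into_rtranclp rstep_sym)
qed

lemma rstep_app: "rstep n x y \<Longrightarrow> rstep n (p @ x @ q) (p @ y @ q)"
  unfolding rstep_def
proof (elim exE conjE)
  fix u v l r
  assume "(l, r) \<in> rels n \<or> (r, l) \<in> rels n" "x = u @ l @ v" "y = u @ r @ v"
  then show "\<exists>u v l r. ((l, r) \<in> rels n \<or> (r, l) \<in> rels n) \<and> p @ x @ q = u @ l @ v \<and> p @ y @ q = u @ r @ v"
    by (intro exI[of _ "p @ u"] exI[of _ "v @ q"] exI[of _ l] exI[of _ r]) auto
qed

lemma meq_app: "meq n x y \<Longrightarrow> meq n (p @ x @ q) (p @ y @ q)"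
  unfolding meq_def
proof (induction rule: rtranclp_induct)
  case base then show ?case by simp
next
  case (step y z) then show ?case
    by (meson rstep_app rtranclp.rtrancl_into_rtrancl)
qed

lemma meq_cons: "meq n x y \<Longrightarrow> meq n (a # x) (a # y)"
  using meq_app[of n x y "[a]" "[]"] by simp

lemma meq_appL: "meq n x y \<Longrightarrow> meq n (p @ x) (p @ y)"
  using meq_app[of n x y p "[]"] by simp

lemma meq_appR: "meq n x y \<Longrightarrow> meq n (x @ q) (y @ q)"
  using meq_app[of n x y "[]" q] by simp

lemma rel_step: "1 \<le> i \<Longrightarrow> i \<le> n - 1 \<Longrightarrow> meq n [1, n, i] [i + 1, n]"
  apply (rule meq_step)
  unfolding rstep_def rels_def
  by (rule exI[of _ "[]"], rule exI[of _ "[]"]) auto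

lemma rstep_sum: "rstep n x y \<Longrightarrow> sum_list x = sum_list y"
  unfolding rstep_def rels_def by auto

lemma meq_sum: "meq n x y \<Longrightarrow> sum_list x = sum_list y"
  unfolding meq_def
  by (induction rule: rtranclp_induct) (auto dest: rstep_sum)

lemma rstep_words: "rstep n x y \<Longrightarrow> x \<in> words n \<Longrightarrow> y \<in> words n"
  unfolding rstep_def rels_def words_def by auto

lemma meq_words: "meq n x y \<Longrightarrow> x \<in> words n \<Longrightarrow> y \<in> words n"
  unfolding meq_def
  by (induction rule: rtranclp_induct) (auto dest: rstep_words)

lemma ident: "1 \<le> i \<Longrightarrow> i < j \<Longrightarrow> j \<le> n \<Longrightarrow>
   meq n ([i] @ replicate i n @ [j - i]) ([j] @ replicate i n)"
proof (induction i arbitrary: j)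
  case 0 then show ?case by simp
next
  case (Suc i)
  show ?case
  proof (cases "i = 0")
    case True
    have "meq n [1, n, j - 1] [j - 1 + 1, n]" using Suc by (intro rel_step) auto
    then show ?thesis using Suc True by simp
  next
    case False
    have a: "meq n [Suc i, n] [1, n, i]"
    proof -
      have "meq n [1, n, i] [i + 1, n]" using Suc.prems False by (intro rel_step) auto
      then show ?thesis by (simp add: meq_sym)
    qed
    have b: "meq n ([i] @ replicate i n @ [(j - 1) - i]) ([j - 1] @ replicate i n)"
      using Suc.IH[of "j - 1"] Suc.prems False by simp
    have c: "meq n [1, n, j - 1] [j - 1 + 1, n]" using Suc by (intro rel_step) auto
    have "[Suc i] @ replicate (Suc i) n @ [j - Suc i] = [Suc i, n] @ replicate i n @ [j - Suc i]"
      by (simp add: replicate_app_Cons_same)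
    also have "meq n \<dots> ([1, n, i] @ replicate i n @ [j - Suc i])"
      using meq_appR[OF a] by simp
    also have "\<dots> = [1, n] @ ([i] @ replicate i n @ [(j - 1) - i])" by simp
    also have "meq n \<dots> ([1, n] @ [j - 1] @ replicate i n)" by (rule meq_appL[OF b])
    also have "\<dots> = [1, n, j - 1] @ replicate i n" by simp
    also have "meq n \<dots> ([j - 1 + 1, n] @ replicate i n)" by (rule meq_appR[OF c])
    also have "\<dots> = [j] @ replicate (Suc i) n" using Suc by (simp add: replicate_app_Cons_same)
    finally show ?thesis .
  qed
qed

lemma front:
  assumes "rstep n (a # u) y"
  shows "(\<exists>u'. y = a # u' \<and> rstep n u u') \<or>
    (\<exists>i t. 1 \<le> i \<and> i \<le> n - 1 \<and> ((a = 1 \<and> u = n # i # t \<and> y = (i + 1) # n # t) \<or>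
                                    (a = i + 1 \<and> u = n # t \<and> y = 1 # n # i # t)))"
proof -
  obtain u0 v l r where lr: "(l, r) \<in> rels n \<or> (r, l) \<in> rels n" and x: "a # u = u0 @ l @ v"
    and y: "y = u0 @ r @ v"
    using assms unfolding rstep_def by blast
  show ?thesis
  proof (cases u0)
    case Nil
    then show ?thesis using lr x y unfolding rels_def by auto
  next
    case (Cons c u1)
    then have "rstep n u (u1 @ r @ v)" using lr x unfolding rstep_def by auto
    then show ?thesis using Cons x y by auto
  qed
qed

definition R :: "nat \<Rightarrow> nat \<Rightarrow> nat list \<Rightarrow> nat \<Rightarrow> nat list \<Rightarrow> bool" where
  "R n a u b v \<longleftrightarrow> (a = b \<longrightarrow> meq n u v)
    \<and> (a < b \<longrightarrow> (\<exists>w. meq n u (replicate a n @ [b - a] @ w) \<and> meq n v (replicate a n @ w)))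
    \<and> (b < a \<longrightarrow> (\<exists>w. meq n v (replicate b n @ [a - b] @ w) \<and> meq n u (replicate b n @ w)))"

lemma R_lt: "a < b \<Longrightarrow> meq n u (replicate a n @ [b - a] @ w) \<Longrightarrow> meq n v (replicate a n @ w) \<Longrightarrow> R n a u b v"
  unfolding R_def by auto

lemma R_gt: "b < a \<Longrightarrow> meq n v (replicate b n @ [a - b] @ w) \<Longrightarrow> meq n u (replicate b n @ w) \<Longrightarrow> R n a u b v"
  unfolding R_def by auto

lemma R_eq: "a = b \<Longrightarrow> meq n u v \<Longrightarrow> R n a u b v"
  unfolding R_def by auto

lemma R_transfer: "meq n u u' \<Longrightarrow> R n a u' b v \<Longrightarrow> R n a u b v"
  unfolding R_def using meq_trans by blast

lemma main:
  assumes n: "1 \<le> n"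
  shows "sum_list (a # u) = N \<Longrightarrow> 1 \<le> b \<Longrightarrow> b \<le> n \<Longrightarrow> meq n (a # u) (b # v) \<Longrightarrow> R n a u b v"
proof (induction N arbitrary: a u b v rule: less_induct)
  case (less N)
  have cancel: "meq n s w" if "sum_list (n # s) < N" "meq n (n # s) (n # w)" for s w
    using less.IH[of "sum_list (n # s)" n s n w] n that unfolding R_def by auto
  have IH2: "R n a' u' b' v'" if "sum_list (a' # u') < N" "1 \<le> b'" "b' \<le> n"
    "meq n (a' # u') (b' # v')" for a' u' b' v'
    using less.IH that by blast
  have gen: "(rstep n)\<^sup>*\<^sup>* x (b # v) \<Longrightarrow> \<forall>a' u'. x = a' # u' \<longrightarrow> sum_list x = N \<longrightarrow> R n a' u' b v" for x
  proof (induction x rule: converse_rtranclp_induct)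
    case base
    then show ?case unfolding R_def by auto
  next
    case (step x x')
    show ?case
    proof (intro allI impI)
      fix a u assume xa: "x = a # u" and sx: "sum_list x = N"
      have sx': "sum_list x' = N" using rstep_sum[OF step.hyps(1)] sx by simp
      from front[of n a u x'] step.hyps(1) xa
      consider (A) u1 where "x' = a # u1" "rstep n u u1"
        | (B) i t where "1 \<le> i" "i \<le> n - 1" "a = 1" "u = n # i # t" "x' = (i + 1) # n # t"
        | (C) i t where "1 \<le> i" "i \<le> n - 1" "a = i + 1" "u = n # t" "x' = 1 # n # i # t"
        by blast
      then show "R n a u b v"
      proof cases
        case A
        then have "R n a u1 b v" using step.IH sx' by blast
        then show ?thesis using A R_transfer meq_step by blast
      next
        case B
        have Rc: "R n (i + 1) (n # t) b v" using step.IH sx' B by blast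
        have N: "N = 1 + n + i + sum_list t" using sx xa B by simp
        consider "b = i + 1" | "b = 1" "b < i + 1" | "1 < b" "b < i + 1" | "i + 1 < b"
          using less.prems by linarith
        then show ?thesis
        proof cases
          case 1
          then have "meq n (n # t) v" using Rc unfolding R_def by simp
          note hh = this
          show ?thesis unfolding B(3,4) by (rule R_lt[where w=t]) (use hh 1 B in \<open>simp_all add: meq_sym\<close>)
        next
          case 2
          then obtain w where w1: "meq n v (n # i # w)" and w2: "meq n (n # t) (n # w)"
            using Rc unfolding R_def by auto
          have "meq n t w" using cancel[OF _ w2] N by simp
          then have "meq n (n # i # t) (n # i # w)" using meq_appL[of n t w "[n, i]"] by simp
          then have "meq n (n # i # t) v" using meq_trans[OF _ meq_sym[OF w1]] by blast
          note hh = this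
          show ?thesis unfolding B(3,4) by (rule R_eq) (use hh 2 B in \<open>simp_all\<close>)
        next
          case 3
          obtain b' where b': "b = Suc b'" "1 \<le> b'" using 3 by (cases b) auto
          obtain w where w1: "meq n v (replicate b n @ [i + 1 - b] @ w)"
            and w2: "meq n (n # t) (replicate b n @ w)"
            using Rc 3 unfolding R_def by auto
          have "meq n t (replicate b' n @ w)" using cancel[of t "replicate b' n @ w"] w2 N b' by simp
          then have e1: "meq n (n # i # t) ([n, i] @ replicate b' n @ w)"
            using meq_appL[of n t _ "[n, i]"] by simp
          have id: "meq n ([b'] @ replicate b' n @ [i - b']) ([i] @ replicate b' n)"
            using ident[of b' i n] b' 3 B by simp
          have e2: "meq n ([n, i] @ replicate b' n @ w) ([n, b'] @ replicate b' n @ [i - b'] @ w)"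
            using meq_app[OF meq_sym[OF id], of "[n]" w] by simp
          have "i - b' = i + 1 - b" using b' by simp
          note hh = this
          show ?thesis unfolding B(3,4)
            by (rule R_lt[where w="replicate b' n @ [i + 1 - b] @ w"]) (use hh 3 B b' w1 meq_trans[OF e1 e2] in simp_all)
        next
          case 4
          obtain w where w1: "meq n (n # t) (replicate (i + 1) n @ [b - (i + 1)] @ w)"
            and w2: "meq n v (replicate (i + 1) n @ w)"
            using Rc 4 unfolding R_def by auto
          have "meq n t (replicate i n @ [b - (i + 1)] @ w)"
            using cancel[of t "replicate i n @ [b - (i + 1)] @ w"] w1 N by simp
          then have e1: "meq n (n # i # t) ([n, i] @ replicate i n @ [b - (i + 1)] @ w)"
            using meq_appL[of n t _ "[n, i]"] by simp
          have id: "meq n ([i] @ replicate i n @ [(b - 1) - i]) ([b - 1] @ replicate i n)"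
            using ident[of i "b - 1" n] 4 B less.prems by simp
          have e2: "meq n ([n, i] @ replicate i n @ [b - (i + 1)] @ w) ([n, b - 1] @ replicate i n @ w)"
            using meq_app[OF id, of "[n]" w] by (simp add: diff_diff_add)
          show ?thesis unfolding B(3,4) by (rule R_lt[where w="replicate i n @ w"]) (use 4 B w2 meq_trans[OF e1 e2] in \<open>simp_all\<close>)
        qed
      next
        case C
        have Rc: "R n 1 (n # i # t) b v" using step.IH sx' C by blast
        have N: "N = i + 1 + n + sum_list t" using sx xa C by simp
        show ?thesis
        proof (cases "b = 1")
          case True
          then have "meq n (n # i # t) v" using Rc unfolding R_def by simp
          note hh = this
          show ?thesis unfolding C(3,4) by (rule R_gt[where w=t]) (use hh True C in \<open>simp_all add: meq_sym\<close>)
        next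
          case False
          then have b1: "1 < b" using less.prems by simp
          then obtain w where w1: "meq n (n # i # t) (n # (b - 1) # w)" and w2: "meq n v (n # w)"
            using Rc unfolding R_def by auto
          have m: "meq n (i # t) ((b - 1) # w)" using cancel[OF _ w1] N by simp
          have Ri: "R n i t (b - 1) w"
            using IH2[OF _ _ _ m] N b1 less.prems by simp
          consider "i = b - 1" | "i < b - 1" | "b - 1 < i" by linarith
          then show ?thesis
          proof cases
            case 1
            then have "meq n t w" using Ri unfolding R_def by simp
            then have "meq n (n # t) v" using meq_trans[OF meq_cons meq_sym[OF w2]] by blast
            note hh = this
            show ?thesis unfolding C(3,4) by (rule R_eq) (use hh 1 C b1 in \<open>simp_all\<close>)
          next
            case 2
            then obtain w2' where a1: "meq n t (replicate i n @ [b - 1 - i] @ w2')"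
              and a2: "meq n w (replicate i n @ w2')" using Ri unfolding R_def by auto
            have "meq n (n # t) (replicate (i + 1) n @ [b - (i + 1)] @ w2')"
              using meq_cons[OF a1, of n] by simp
            moreover have "meq n v (replicate (i + 1) n @ w2')"
              using meq_trans[OF w2 meq_cons[OF a2, of n]] by simp
            note hh = calculation this
            show ?thesis unfolding C(3,4) by (rule R_lt) (use hh 2 C in \<open>simp_all\<close>)
          next
            case 3
            then obtain w2' where a1: "meq n w (replicate (b - 1) n @ [i - (b - 1)] @ w2')"
              and a2: "meq n t (replicate (b - 1) n @ w2')" using Ri unfolding R_def by auto
            have rb: "replicate b n = n # replicate (b - 1) n" using b1
              by (metis Suc_diff_1 less_trans zero_less_one replicate_Suc)
            have "meq n v (replicate b n @ [i + 1 - b] @ w2')"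
              using meq_trans[OF w2 meq_cons[OF a1, of n]] rb 3 b1
              by (simp add: Suc_diff_le)
            moreover have "meq n (n # t) (replicate b n @ w2')"
              using meq_cons[OF a2, of n] rb by simp
            note hh = calculation this
            show ?thesis unfolding C(3,4) by (rule R_gt) (use hh 3 C b1 in \<open>simp_all\<close>)
          qed
        qed
      qed
    qed
  qed
  show ?case using gen less.prems unfolding meq_def by blast
qed

theorem corollary4p10:
  fixes n i j :: nat
  assumes "1 \<le> n" and "1 \<le> i" and "i < j" and "j \<le> n"
  shows "is_right_lcm n [i] [j] ([i] @ replicate i n @ [j - i])
         \<and> meq n ([i] @ replicate i n @ [j - i]) ([j] @ replicate i n)"
proof -
  let ?c = "[i] @ replicate i n @ [j - i]"
  have E: "meq n ?c ([j] @ replicate i n)" using ident assms by simp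
  have cw: "?c \<in> words n" using assms unfolding words_def by auto
  have d1: "ldiv n [i] ?c" unfolding ldiv_def words_def
    by (rule bexI[of _ "replicate i n @ [j - i]"]) (use assms in auto)
  have d2: "ldiv n [j] ?c" unfolding ldiv_def words_def
    by (rule bexI[of _ "replicate i n"]) (use assms meq_sym[OF E] in auto)
  have d3: "ldiv n ?c d" if dh: "d \<in> words n" "ldiv n [i] d" "ldiv n [j] d" for d
  proof -
    obtain x where x: "x \<in> words n" "meq n ([i] @ x) d" using dh unfolding ldiv_def by blast
    obtain y where y: "y \<in> words n" "meq n ([j] @ y) d" using dh unfolding ldiv_def by blast
    have "meq n (i # x) (j # y)" using meq_trans[OF x(2) meq_sym[OF y(2)]] by simp
    then have "R n i x j y" using main[of n i x _ j y] assms by simp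
    then obtain w where w: "meq n x (replicate i n @ [j - i] @ w)" unfolding R_def using assms by auto
    have "replicate i n @ [j - i] @ w \<in> words n" using meq_words[OF w x(1)] .
    then have ww: "w \<in> words n" unfolding words_def by simp
    have "meq n (?c @ w) ([i] @ x)" using meq_cons[OF meq_sym[OF w], of i] by simp
    then have "meq n (?c @ w) d" using meq_trans[OF _ x(2)] by blast
    then show ?thesis unfolding ldiv_def using ww by blast
  qed
  have "is_right_lcm n [i] [j] ?c" unfolding is_right_lcm_def using cw d1 d2 d3 by blast
  then show ?thesis using E by simp
qed

end
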